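(* Let $K$ be a twisted knot diagram with an even number of bars. Then $K$ admits a coloring by the twisted biquandle $(\mathbb{Z},\ a\ast b=a\circ b=a+1,\ f(a)=-a)$ if and only if $S(K)=0$.
   Context: A twisted knot diagram is a virtual knot diagram with finitely many bars on its edges. Segments are the pieces between real crossings and bars. A coloring by $(\mathbb{Z}, a\ast b=a\circ b=a+1, f(a)=-a)$ labels segments by integers so that at each real crossing, with $x$ the label of the under-strand segment to the right of the over-strand and $y$ the label of the over-strand segment to the right of the under-strand (right with respect to strand orientations), the other under-segment is labeled $x+1$ and the other over-segment $y+1$, and labels on the two sides of a bar are negatives of each other. If $K$ has $2n\geq 2$ bars, they cut $K$ into edges $e_1,\dots,e_{2n}$ numbered consecutively along the orientation; for an edge $e$, $o_\pm(e)$ (resp. $u_\pm(e)$) is the number of positive/negative crossings at which $e$ is the over-strand (resp. under-strand), $s(e)=u_+(e)+o_-(e)-u_-(e)-o_+(e)$, and $S(K)=\left|\sum_{i=1}^n s(e_{2i-1})-\sum_{i=1}^n s(e_{2i})\right|$; $S(K)=0$ if there are no bars. A crossing is positive if, with both strands pointing upward, the over-strand runs from bottom-left to top-right. *)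

theory Defs
  imports Main
begin

text \<open>Combinatorial model of a (one-component) twisted knot diagram:
  a signed Gauss code with bars.  The diagram is the cyclic list of events met
  when travelling once around the knot along its orientation.  Virtual crossings
  do not affect segments, colorings or S(K), so they are not recorded.
  Crossing c is positive iff sg c.\<close>

datatype event = Bar | Over nat | Under nat

definition wf_diagram :: "event list \<Rightarrow> bool" where
  "wf_diagram G \<longleftrightarrow>
     (\<forall>c. (Over c \<in> set G \<or> Under c \<in> set G) \<longrightarrow>
        length (filter (\<lambda>e. e = Over c) G) = 1 \<and> length (filter (\<lambda>e. e = Under c) G) = 1)"

text \<open>Segments: with m events (positions 0..m-1), segment j is the piece of
  the knot leaving event j and ending at event (j+1) mod m.  Hence at event j
  the incoming segment is (j + m - 1) mod m and the outgoing one is j.\<close>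

definition in_seg :: "nat \<Rightarrow> nat \<Rightarrow> nat" where
  "in_seg m j = (j + m - 1) mod m"

text \<open>Derived from the rule in the paper:
  at a positive crossing the under-label increases by 1 and the over-label
  decreases by 1 along the orientation; at a negative crossing the under-label
  decreases by 1 and the over-label increases by 1; at a bar the label is negated.\<close>

fun event_ok :: "(nat \<Rightarrow> bool) \<Rightarrow> event \<Rightarrow> int \<Rightarrow> int \<Rightarrow> bool" where
  "event_ok sg Bar a b \<longleftrightarrow> b = - a"
| "event_ok sg (Under c) a b \<longleftrightarrow> (if sg c then b = a + 1 else b = a - 1)"
| "event_ok sg (Over c) a b \<longleftrightarrow> (if sg c then b = a - 1 else b = a + 1)"

definition is_coloring :: "event list \<Rightarrow> (nat \<Rightarrow> bool) \<Rightarrow> (nat \<Rightarrow> int) \<Rightarrow> bool" where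
  "is_coloring G sg col \<longleftrightarrow>
     (\<forall>j < length G. event_ok sg (G ! j) (col (in_seg (length G) j)) (col j))"

definition colorable :: "event list \<Rightarrow> (nat \<Rightarrow> bool) \<Rightarrow> bool" where
  "colorable G sg \<longleftrightarrow> (\<exists>col. is_coloring G sg col)"

text \<open>Contribution of an event to s(e) = u+ + o- - u- - o+.\<close>

fun s_contrib :: "(nat \<Rightarrow> bool) \<Rightarrow> event \<Rightarrow> int" where
  "s_contrib sg Bar = 0"
| "s_contrib sg (Under c) = (if sg c then 1 else -1)"
| "s_contrib sg (Over c) = (if sg c then -1 else 1)"

definition bar_positions :: "event list \<Rightarrow> nat list" where
  "bar_positions G = filter (\<lambda>i. G ! i = Bar) [0..<length G]"

text \<open>Positions of the events on edge i (0-based) : strictly between bar i and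
  bar i+1 (cyclically, the last edge runs from the last bar around to the first).\<close>

definition edge_positions :: "event list \<Rightarrow> nat \<Rightarrow> nat set" where
  "edge_positions G i =
     (let B = bar_positions G; k = length B in
      if Suc i < k then {p. B ! i < p \<and> p < B ! Suc i}
      else {p. p < length G \<and> (B ! (k - 1) < p \<or> p < B ! 0)})"

definition s_edge :: "event list \<Rightarrow> (nat \<Rightarrow> bool) \<Rightarrow> nat \<Rightarrow> int" where
  "s_edge G sg i = (\<Sum>p\<in>edge_positions G i. s_contrib sg (G ! p))"

text \<open>S(K): edges e_1..e_{2n} correspond to i = 0..2n-1; odd-numbered edges
  e_{2i-1} are those with even 0-based index.\<close>

definition S_inv :: "event list \<Rightarrow> (nat \<Rightarrow> bool) \<Rightarrow> int" where
  "S_inv G sg =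
     (let k = length (bar_positions G) in
      if k = 0 then 0
      else \<bar>(\<Sum>i<k. if even i then s_edge G sg i else 0)
            - (\<Sum>i<k. if odd i then s_edge G sg i else 0)\<bar>)"

end

theory Submission
  imports Defs
begin

lemma sorted_less_prefix:
  "sorted_wrt (<) B \<Longrightarrow> j < length B \<Longrightarrow> (B!j < (p::nat)) = (j < length (filter (\<lambda>q. q<p) B))"
proof (induction B arbitrary: j)
  case Nil then show ?case by simp
next
  case (Cons a B)
  show ?case
  proof (cases "a < p")
    case True
    then show ?thesis using Cons by (cases j) auto
  next
    case False
    have f: "filter (\<lambda>q. q<p) B = []" using Cons.prems(1) False
      by (auto simp: filter_empty_conv)
    have "B' ! j \<ge> a" if "B' = a # B" for B'
      using Cons.prems that by (cases j) (auto, metis nth_mem less_imp_le)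
    then show ?thesis using False f by auto
  qed
qed

lemma ev_ok:
  assumes "\<epsilon> = 1 \<or> \<epsilon> = (-1::int)"
  shows "event_ok sg ev a b \<longleftrightarrow>
    (if ev = Bar then -\<epsilon> else \<epsilon>) * b = \<epsilon> * a + (if ev = Bar then -\<epsilon> else \<epsilon>) * s_contrib sg ev"
  using assms by (cases ev) auto

lemma in_seg_0: "0 < m \<Longrightarrow> in_seg m 0 = m - 1"
  by (simp add: in_seg_def)

lemma in_seg_pos: "0 < p \<Longrightarrow> p < m \<Longrightarrow> in_seg m p = p - 1"
proof -
  assume a: "0 < p" "p < m"
  then obtain q where q: "p = Suc q" by (cases p) auto
  show ?thesis using a unfolding q in_seg_def by simp
qed

lemma sum_list_count_int:
  fixes f :: "'a \<Rightarrow> int"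
  assumes "set xs \<subseteq> X" "finite X"
  shows "sum_list (map f xs) = (\<Sum>x\<in>X. int (count_list xs x) * f x)"
  using assms(1)
proof (induction xs)
  case Nil then show ?case by simp
next
  case (Cons a xs)
  have "(\<Sum>x\<in>X. int (count_list (a # xs) x) * f x)
      = (\<Sum>x\<in>X. (if a = x then f x else 0)) + (\<Sum>x\<in>X. int (count_list xs x) * f x)"
    by (auto simp: sum.distrib[symmetric] distrib_right intro!: sum.cong)
  also have "(\<Sum>x\<in>X. (if a = x then f x else 0)) = f a" using Cons.prems assms(2) by simp
  finally show ?case using Cons by simp
qed

lemma cyc:
  fixes w :: "nat \<Rightarrow> int"
  assumes m: "0 < m"
  shows "(\<exists>g::nat\<Rightarrow>int. \<forall>p<m. g p = g (in_seg m p) + w p) \<longleftrightarrow> (\<Sum>p<m. w p) = 0"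
proof
  assume "\<exists>g::nat\<Rightarrow>int. \<forall>p<m. g p = g (in_seg m p) + w p"
  then obtain g where g: "\<forall>p<m. g p = g (in_seg m p) + w p" by blast
  have h: "p < m \<Longrightarrow> g p - (\<Sum>q<Suc p. w q) = g 0 - w 0" for p
  proof (induction p)
    case 0 then show ?case by simp
  next
    case (Suc p)
    have "g (Suc p) = g p + w (Suc p)" using g Suc.prems in_seg_pos[of "Suc p" m] by auto
    then show ?case using Suc by simp
  qed
  have "g (m-1) - (\<Sum>q<m. w q) = g 0 - w 0" using h[of "m-1"] m by simp
  moreover have "g 0 = g (m-1) + w 0" using g m in_seg_0[OF m] by auto
  ultimately show "(\<Sum>p<m. w p) = 0" by simp
next
  assume z: "(\<Sum>p<m. w p) = 0"
  define g where "g p = (\<Sum>q<Suc p. w q)" for p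
  have "\<forall>p<m. g p = g (in_seg m p) + w p"
  proof (intro allI impI)
    fix p assume p: "p < m"
    show "g p = g (in_seg m p) + w p"
    proof (cases p)
      case 0
      then show ?thesis using z m in_seg_0[OF m] by (simp add: g_def)
    next
      case (Suc q)
      then show ?thesis using in_seg_pos[of p m] p by (simp add: g_def)
    qed
  qed
  then show "\<exists>g::nat\<Rightarrow>int. \<forall>p<m. g p = g (in_seg m p) + w p" by blast
qed

lemma wf_sum_zero:
  assumes wf: "wf_diagram G"
  shows "sum_list (map (s_contrib sg) G) = 0"
proof -
  define C where "C = {c. Over c \<in> set G \<or> Under c \<in> set G}"
  have fC: "finite C"
  proof -
    have "C \<subseteq> (\<lambda>e. case e of Over c \<Rightarrow> c | Under c \<Rightarrow> c | Bar \<Rightarrow> 0) ` set G"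
      unfolding C_def by (force split: event.splits)
    then show ?thesis by (rule finite_subset) simp
  qed
  have cnt: "count_list G (Over c) = 1" "count_list G (Under c) = 1" if "c \<in> C" for c
  proof -
    have "length (filter (\<lambda>e. e = Over c) G) = 1" "length (filter (\<lambda>e. e = Under c) G) = 1"
      using wf that unfolding wf_diagram_def C_def by auto
    moreover have "\<And>x::event. filter ((=) x) G = filter (\<lambda>e. e = x) G" by (rule filter_cong) auto
    ultimately show "count_list G (Over c) = 1" "count_list G (Under c) = 1"
      by (simp_all only: count_list_eq_length_filter)
  qed
  define X where "X = {Bar} \<union> Over ` C \<union> Under ` C"
  have sub: "set G \<subseteq> X" unfolding X_def C_def
    by (auto intro: event.exhaust)
  have fX: "finite X" using fC by (simp add: X_def)
  have "sum_list (map (s_contrib sg) G) = (\<Sum>x\<in>X. int (count_list G x) * s_contrib sg x)"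
    by (rule sum_list_count_int[OF sub fX])
  also have "\<dots> = (\<Sum>x\<in>Over ` C \<union> Under ` C. int (count_list G x) * s_contrib sg x)"
    unfolding X_def using fC by (simp add: sum.insert_if)
  also have "\<dots> = (\<Sum>x\<in>Over ` C. int (count_list G x) * s_contrib sg x)
      + (\<Sum>x\<in>Under ` C. int (count_list G x) * s_contrib sg x)"
    using fC by (subst sum.union_disjoint) auto
  also have "(\<Sum>x\<in>Over ` C. int (count_list G x) * s_contrib sg x) = (\<Sum>c\<in>C. - (if sg c then 1 else -1))"
    by (subst sum.reindex) (auto simp: inj_on_def cnt intro!: sum.cong)
  also have "(\<Sum>x\<in>Under ` C. int (count_list G x) * s_contrib sg x) = (\<Sum>c\<in>C. (if sg c then 1 else -1))"
    by (subst sum.reindex) (auto simp: inj_on_def cnt intro!: sum.cong)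
  finally show ?thesis by (simp add: sum_negf)
qed


theorem lemma7p6:
  fixes G :: "event list" and sg :: "nat \<Rightarrow> bool"
  assumes "wf_diagram G"
    and "even (length (filter (\<lambda>e. e = Bar) G))"
  shows "colorable G sg \<longleftrightarrow> S_inv G sg = 0"
proof (cases "G = []")
  case True
  then show ?thesis
    by (simp add: colorable_def is_coloring_def S_inv_def bar_positions_def)
next
  case False
  define m where "m = length G"
  have m0: "0 < m" using False by (simp add: m_def)
  define B where "B = bar_positions G"
  define k where "k = length B"
  have setB: "set B = {p. p < m \<and> G!p = Bar}"
    by (auto simp: B_def bar_positions_def m_def)
  have sortB: "sorted_wrt (<) B"
    by (simp add: B_def bar_positions_def sorted_wrt_filter sorted_wrt_upt)
  have distB: "distinct B" by (simp add: B_def bar_positions_def)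
  have "k = card ({i. G!i = Bar} \<inter> set [0..<m])"
    unfolding k_def B_def bar_positions_def m_def by (rule distinct_length_filter) simp
  also have "\<dots> = card {i. i < length G \<and> G!i = Bar}"
    by (rule arg_cong[where f=card]) (auto simp: m_def)
  also have "\<dots> = length (filter (\<lambda>e. e = Bar) G)"
    by (simp add: length_filter_conv_card)
  finally have kev: "even k" using assms(2) by simp
  define L where "L p = length (filter (\<lambda>q. q < p) B)" for p
  define e where "e p = (-1::int) ^ (L (Suc p))" for p
  define w where "w p = e p * s_contrib sg (G!p)" for p
  have LSuc: "L (Suc p) = L p + (if p < m \<and> G!p = Bar then 1 else 0)" for p
  proof -
    have c: "L q = card ({x. x < q} \<inter> set B)" for q
      unfolding L_def by (rule distinct_length_filter[OF distB])
    have "{x. x < Suc p} \<inter> set B = (if p \<in> set B then insert p ({x. x < p} \<inter> set B) else {x. x < p} \<inter> set B)"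
      by (auto simp: less_Suc_eq)
    then show ?thesis unfolding c using setB by auto
  qed
  have L0: "L 0 = 0" by (simp add: L_def)
  have Lm: "L m = k"
  proof -
    have "filter (\<lambda>q. q < m) B = B" using setB by (auto intro: filter_True)
    then show ?thesis by (simp add: L_def k_def)
  qed
  have Lle: "L p \<le> k" for p by (simp add: L_def k_def)
  have e_pm: "e p = 1 \<or> e p = -1" for p
    unfolding e_def by (cases "even (L (Suc p))") (simp_all add: neg_one_even_power neg_one_odd_power)
  have e_sq: "e p * e p = 1" for p using e_pm[of p] by auto
  have key: "e p = (if G!p = Bar then - e (in_seg m p) else e (in_seg m p))" if p: "p < m" for p
  proof (cases p)
    case 0
    have "e (m - 1) = 1" using Lm kev m0 by (simp add: e_def)
    then show ?thesis using 0 in_seg_0[OF m0] m0 by (simp add: e_def LSuc L0)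
  next
    case (Suc q)
    have "in_seg m p = q" using in_seg_pos[of p m] p Suc by simp
    then show ?thesis using Suc p by (simp add: e_def LSuc)
  qed
  have col_eq: "is_coloring G sg col \<longleftrightarrow> (\<forall>p<m. e p * col p = e (in_seg m p) * col (in_seg m p) + w p)" for col
  proof -
    have "event_ok sg (G!p) (col (in_seg m p)) (col p) \<longleftrightarrow> e p * col p = e (in_seg m p) * col (in_seg m p) + w p"
      if p: "p < m" for p
      using ev_ok[OF e_pm[of "in_seg m p"], of sg "G!p" "col (in_seg m p)" "col p"] key[OF p]
      by (simp add: w_def)
    then show ?thesis unfolding is_coloring_def m_def by auto
  qed
  have col_iff: "colorable G sg \<longleftrightarrow> (\<exists>g::nat\<Rightarrow>int. \<forall>p<m. g p = g (in_seg m p) + w p)"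
  proof
    assume "colorable G sg"
    then obtain col where "is_coloring G sg col" by (auto simp: colorable_def)
    then have "\<forall>p<m. e p * col p = e (in_seg m p) * col (in_seg m p) + w p"
      using col_eq by auto
    then show "\<exists>g::nat\<Rightarrow>int. \<forall>p<m. g p = g (in_seg m p) + w p"
      by (intro exI[of _ "\<lambda>p. e p * col p"])
  next
    assume "\<exists>g::nat\<Rightarrow>int. \<forall>p<m. g p = g (in_seg m p) + w p"
    then obtain g where g: "\<forall>p<m. g p = g (in_seg m p) + w p" by blast
    have ee: "e q * (e q * g q) = g q" for q using e_sq[of q] by (simp add: mult.assoc[symmetric])
    have "is_coloring G sg (\<lambda>p. e p * g p)"
      unfolding col_eq ee using g by simp
    then show "colorable G sg" by (auto simp: colorable_def)
  qed
  have cw: "colorable G sg \<longleftrightarrow> (\<Sum>p<m. w p) = 0"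
    using col_iff cyc[OF m0] by simp
  show ?thesis
  proof (cases "k = 0")
    case True
    have "L p = 0" for p using Lle[of p] True by simp
    then have "w p = s_contrib sg (G!p)" for p by (simp add: w_def e_def)
    then have "(\<Sum>p<m. w p) = sum_list (map (s_contrib sg) G)"
      by (simp add: sum_list_sum_nth m_def atLeast0LessThan)
    then have "(\<Sum>p<m. w p) = 0" using wf_sum_zero[OF assms(1)] by simp
    moreover have "S_inv G sg = 0" using True by (simp add: S_inv_def k_def B_def)
    ultimately show ?thesis using cw by simp
  next
    case False
    define E where "E i = edge_positions G i" for i
    define s where "s p = s_contrib sg (G!p)" for p
    have Sform: "S_inv G sg = \<bar>\<Sum>i<k. (-1)^i * s_edge G sg i\<bar>"
    proof -
      have "(\<Sum>i<k. if even i then s_edge G sg i else 0) - (\<Sum>i<k. if odd i then s_edge G sg i else 0)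
          = (\<Sum>i<k. (-1)^i * s_edge G sg i)"
        by (auto simp: sum_subtractf[symmetric] intro!: sum.cong)
      then show ?thesis using False unfolding S_inv_def Let_def B_def[symmetric] k_def[symmetric]
        by simp
    qed
    have Edef: "E i = (if Suc i < k then {p. B ! i < p \<and> p < B ! Suc i}
      else {p. p < m \<and> (B ! (k - 1) < p \<or> p < B ! 0)})" for i
      unfolding E_def edge_positions_def Let_def B_def[symmetric] k_def[symmetric] m_def by simp
    have Bm: "j < k \<Longrightarrow> B ! j < m" for j using setB nth_mem[of j B] k_def by auto
    have Esub: "E i \<subseteq> {..<m}" if "i < k" for i
      using Bm[of "Suc i"] by (auto simp: Edef)
    have sedge: "s_edge G sg i = (\<Sum>p<m. if p \<in> E i then s p else 0)" if "i < k" for i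
    proof -
      have "E i = {..<m} \<inter> E i" using Esub[OF that] by auto
      then have "s_edge G sg i = (\<Sum>p\<in>{..<m} \<inter> E i. s p)"
        by (simp add: s_edge_def E_def[symmetric] s_def)
      also have "\<dots> = (\<Sum>p<m. if p \<in> E i then s p else 0)"
        by (rule sum.inter_restrict) simp
      finally show ?thesis .
    qed
    have pt: "(\<Sum>i<k. (-1)^i * (if p \<in> E i then s p else 0)) = - w p" if p: "p < m" for p
    proof (cases "G!p = Bar")
      case True
      then have s0: "s p = 0" by (simp add: s_def)
      have "(\<Sum>i<k. (-1)^i * (if p \<in> E i then s p else 0)) = (\<Sum>i<k. (0::int))"
        by (rule sum.cong) (simp_all add: s0)
      then show ?thesis using True by (simp add: w_def)
    next
      case nb: False
      define idx where "idx = (if L p = 0 then k - 1 else L p - 1)"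
      have pref: "j < k \<Longrightarrow> (B!j < p) = (j < L p)" for j
        unfolding L_def k_def by (rule sorted_less_prefix[OF sortB])
      have neq: "j < k \<Longrightarrow> B!j \<noteq> p" for j
        using nth_mem[of j B] setB nb k_def by auto
      have mem: "p \<in> E i \<longleftrightarrow> i = idx" if i: "i < k" for i
      proof (cases "Suc i < k")
        case True
        have "p \<in> E i \<longleftrightarrow> B!i < p \<and> p < B ! Suc i" using True by (simp add: Edef)
        also have "\<dots> \<longleftrightarrow> i < L p \<and> \<not> Suc i < L p"
          using pref[OF i] pref[OF True] neq[OF True] by auto
        finally show ?thesis using True Lle[of p] by (auto simp: idx_def)
      next
        case False
        have ik: "i = k - 1" using False i by simp
        have k1: "k - 1 < k" "0 < k" using i by auto
        have "p \<in> E i \<longleftrightarrow> B!(k-1) < p \<or> p < B ! 0" using False p by (simp add: Edef)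
        also have "\<dots> \<longleftrightarrow> k - 1 < L p \<or> \<not> 0 < L p"
          using pref[OF k1(1)] pref[OF k1(2)] neq[OF k1(2)] by auto
        finally show ?thesis using ik Lle[of p] k1 by (auto simp: idx_def)
      qed
      have idxk: "idx < k" using False Lle[of p] by (auto simp: idx_def)
      have "(\<Sum>i<k. (-1)^i * (if p \<in> E i then s p else 0)) = (\<Sum>i<k. if i = idx then (-1)^i * s p else 0)"
        using mem by (intro sum.cong) auto
      also have "\<dots> = (-1)^idx * s p" using idxk by simp
      also have "(-1::int)^idx = - e p"
      proof -
        have "e p = (-1)^(L p)" using nb by (simp add: e_def LSuc)
        moreover have "(-1::int)^idx = - ((-1)^(L p))"
        proof (cases "L p = 0")
          case True
          have "odd (k - 1)" using kev False by simp
          then show ?thesis using True by (simp add: idx_def)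
        next
          case False
          then have "L p = Suc (L p - 1)" by simp
          then have "(-1::int)^(L p) = - ((-1)^(L p - 1))" by (metis power_Suc mult_minus1)
          then show ?thesis using False by (simp add: idx_def)
        qed
        ultimately show ?thesis by simp
      qed
      finally show ?thesis by (simp add: w_def s_def)
    qed
    have "(\<Sum>i<k. (-1)^i * s_edge G sg i) = (\<Sum>i<k. \<Sum>p<m. (-1)^i * (if p \<in> E i then s p else 0))"
      by (intro sum.cong) (simp_all add: sedge sum_distrib_left)
    also have "\<dots> = (\<Sum>p<m. \<Sum>i<k. (-1)^i * (if p \<in> E i then s p else 0))"
      by (rule sum.swap)
    also have "\<dots> = (\<Sum>p<m. - w p)" using pt by (intro sum.cong) auto
    finally have "(\<Sum>i<k. (-1)^i * s_edge G sg i) = - (\<Sum>p<m. w p)" by (simp add: sum_negf)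
    then show ?thesis using Sform cw by simp
  qed
qed

end
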